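(* Let $\mathcal D$ be a finite doset on a poset $\mathcal P$ which has a unique minimal element $\alpha_0$, and let $A$ be an algebra with straightening law on $\mathcal D$. Write $A=\mathbb{C}[\mathcal D]/J$, where $\mathbb{C}[\mathcal D]$ is the polynomial ring in variables $x_{(\alpha,\beta)}$, $(\alpha,\beta)\in\mathcal D$, and $J$ is the kernel of the surjection $x_{(\alpha,\beta)}\mapsto p_{(\alpha,\beta)}$. Then $J$ is saturated: if $f\in\mathbb{C}[\mathcal D]$ and $N\in\mathbb{N}$ satisfy $x^N f\in J$ for every variable $x$, then $f\in J$.
   Context: A doset on a poset $\mathcal P$ is a set $\mathcal D$ with $\Delta_{\mathcal P}\subseteq\mathcal D\subseteq\{(\alpha,\beta)\in\mathcal P\times\mathcal P\mid\alpha\le\beta\}$ ($\Delta_{\mathcal P}$ the diagonal) such that whenever $\alpha\le\beta\le\gamma$, $(\alpha,\gamma)\in\mathcal D$ iff both $(\alpha,\beta)\in\mathcal D$ and $(\beta,\gamma)\in\mathcal D$; it is ordered by $(\alpha,\beta)\le(\gamma,\delta)$ iff $\beta\le\gamma$; one writes $\alpha$ for $(\alpha,\alpha)$. A monomial $p_{(\alpha_1,\beta_1)}\cdots p_{(\alpha_k,\beta_k)}$ is standard if $\alpha_1\le\beta_1\le\alpha_2\le\dots\le\alpha_k\le\beta_k$. A graded $\mathbb{C}$-algebra $A=\bigoplus_{q\ge0}A_q$ is an algebra with straightening law on $\mathcal D$ if there is an injection $\mathcal D\ni(\alpha,\beta)\mapsto p_{(\alpha,\beta)}\in A_1$ such that: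 (1) the $p_{(\alpha,\beta)}$ generate $A$; (2) the standard monomials form a $\mathbb{C}$-basis of $A$; (3) if a monomial $p_{(\alpha_1,\beta_1)}\cdots p_{(\alpha_k,\beta_k)}$ (factors ordered so that the sequence $\alpha_1,\beta_1,\dots,\alpha_k,\beta_k$ is the one being compared) equals $\sum_j c_j p_{(\alpha_{j1},\beta_{j1})}\cdots p_{(\alpha_{jk},\beta_{jk})}$ as a combination of distinct standard monomials, then each sequence $(\alpha_{j1},\beta_{j1},\dots,\alpha_{jk},\beta_{jk})$ is lexicographically smaller than $(\alpha_1,\beta_1,\dots,\alpha_k,\beta_k)$ (at the first differing position the new entry is smaller); (4) if $\alpha_1\le\alpha_2\le\alpha_3\le\alpha_4$ and for some permutation $\sigma\in S_4$ both $(\alpha_{\sigma(1)},\alpha_{\sigma(2)})$ and $(\alpha_{\sigma(3)},\alpha_{\sigma(4)})$ lie in $\mathcal D$, then $p_{(\alpha_{\sigma(1)},\alpha_{\sigma(2)})}p_{(\alpha_{\sigma(3)},\alpha_{\sigma(4)})}=\pm p_{(\alpha_1,\alpha_2)}p_{(\alpha_3,\alpha_4)}+\sum_i r_i m_i$ with the $m_i$ quadratic standard monomials distinct from $p_{(\alpha_1,\alpha_2)}p_{(\alpha_3,\alpha_4)}$. *)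

theory Defs
  imports Complex_Main "HOL-Library.Poly_Mapping" "HOL-Combinatorics.Permutations"
begin

definition is_doset :: "'p::order set \<Rightarrow> ('p \<times> 'p) set \<Rightarrow> bool" where
  "is_doset P D \<longleftrightarrow>
     (\<forall>a\<in>P. (a, a) \<in> D) \<and>
     D \<subseteq> {(a, b). a \<in> P \<and> b \<in> P \<and> a \<le> b} \<and>
     (\<forall>a\<in>P. \<forall>b\<in>P. \<forall>c\<in>P. a \<le> b \<and> b \<le> c \<longrightarrow>
        ((a, c) \<in> D \<longleftrightarrow> (a, b) \<in> D \<and> (b, c) \<in> D))"

definition minimal_in :: "'p::order set \<Rightarrow> 'p \<Rightarrow> bool" where
  "minimal_in P a \<longleftrightarrow> a \<in> P \<and> (\<forall>b\<in>P. b \<le> a \<longrightarrow> b = a)"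

definition flat_seq :: "('p \<times> 'p) list \<Rightarrow> 'p list" where
  "flat_seq xs = concat (map (\<lambda>(a, b). [a, b]) xs)"

definition standard :: "('p::order \<times> 'p) set \<Rightarrow> ('p \<times> 'p) list \<Rightarrow> bool" where
  "standard D xs \<longleftrightarrow> set xs \<subseteq> D \<and> successively (\<le>) (flat_seq xs)"

definition lex_less :: "'p::order list \<Rightarrow> 'p list \<Rightarrow> bool" where
  "lex_less xs ys \<longleftrightarrow>
     (\<exists>i. i < length xs \<and> i < length ys \<and> take i xs = take i ys \<and> xs ! i < ys ! i)"

definition monom :: "('v \<Rightarrow> 'a::comm_ring_1) \<Rightarrow> 'v list \<Rightarrow> 'a" where
  "monom p xs = prod_list (map p xs)"

definition lincomb ::
  "(complex \<Rightarrow> 'a::comm_ring_1) \<Rightarrow> ('v \<Rightarrow> 'a) \<Rightarrow> ('v list \<Rightarrow> complex) \<Rightarrow> 'a" where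
  "lincomb emb p c = (\<Sum>s\<in>{s. c s \<noteq> 0}. emb (c s) * monom p s)"

definition std_coeffs :: "('p::order \<times> 'p) set \<Rightarrow> (('p \<times> 'p) list \<Rightarrow> complex) \<Rightarrow> bool" where
  "std_coeffs D c \<longleftrightarrow> finite {s. c s \<noteq> 0} \<and> (\<forall>s. c s \<noteq> 0 \<longrightarrow> standard D s)"

text \<open>A commutative ring 'a together with a ring homomorphism emb from the complex numbers
  is a (commutative, unital) complex algebra; G q is the degree-q component.\<close>
definition complex_alg :: "(complex \<Rightarrow> 'a::comm_ring_1) \<Rightarrow> bool" where
  "complex_alg emb \<longleftrightarrow> emb 1 = 1 \<and> (\<forall>x y. emb (x + y) = emb x + emb y)
      \<and> (\<forall>x y. emb (x * y) = emb x * emb y)"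

definition graded :: "(complex \<Rightarrow> 'a::comm_ring_1) \<Rightarrow> (nat \<Rightarrow> 'a set) \<Rightarrow> bool" where
  "graded emb G \<longleftrightarrow>
     (\<forall>q. 0 \<in> G q \<and> (\<forall>x\<in>G q. \<forall>y\<in>G q. x + y \<in> G q) \<and> (\<forall>c. \<forall>x\<in>G q. emb c * x \<in> G q)) \<and>
     (\<forall>q r. \<forall>x\<in>G q. \<forall>y\<in>G r. x * y \<in> G (q + r)) \<and>
     (\<forall>a. \<exists>!f. finite {q. f q \<noteq> 0} \<and> (\<forall>q. f q \<in> G q) \<and> a = (\<Sum>q\<in>{q. f q \<noteq> 0}. f q))"

type_synonym 'v cpoly = "('v \<Rightarrow>\<^sub>0 nat) \<Rightarrow>\<^sub>0 complex"

definition polys_in :: "'v set \<Rightarrow> 'v cpoly set" where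
  "polys_in V = {f::'v cpoly. \<forall>m\<in>Poly_Mapping.keys f. Poly_Mapping.keys m \<subseteq> V}"

definition var :: "'v \<Rightarrow> 'v cpoly" where
  "var v = Poly_Mapping.single (Poly_Mapping.single v 1) 1"

definition peval :: "(complex \<Rightarrow> 'a::comm_ring_1) \<Rightarrow> ('v \<Rightarrow> 'a) \<Rightarrow> 'v cpoly \<Rightarrow> 'a" where
  "peval emb p f = (\<Sum>m\<in>Poly_Mapping.keys f. emb (Poly_Mapping.lookup f m) * (\<Prod>v\<in>Poly_Mapping.keys m. p v ^ Poly_Mapping.lookup m v))"

definition ASL ::
  "'p::order set \<Rightarrow> ('p \<times> 'p) set \<Rightarrow> (complex \<Rightarrow> 'a::comm_ring_1) \<Rightarrow> (nat \<Rightarrow> 'a set)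
     \<Rightarrow> ('p \<times> 'p \<Rightarrow> 'a) \<Rightarrow> bool" where
  "ASL P D emb G p \<longleftrightarrow>
     complex_alg emb \<and> graded emb G \<and>
     inj_on p D \<and> (\<forall>x\<in>D. p x \<in> G 1) \<and>
     \<comment> \<open>(1) generation\<close>
     (\<forall>a. \<exists>f\<in>polys_in D. peval emb p f = a) \<and>
     \<comment> \<open>(2) standard monomials form a basis\<close>
     (\<forall>a. \<exists>!c. std_coeffs D c \<and> a = lincomb emb p c) \<and>
     \<comment> \<open>(3) straightening is lexicographically decreasing\<close>
     (\<forall>xs c. set xs \<subseteq> D \<and> \<not> standard D xs \<and> std_coeffs D c \<and>
        (\<forall>s. c s \<noteq> 0 \<longrightarrow> length s = length xs) \<and> monom p xs = lincomb emb p c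
        \<longrightarrow> (\<forall>s. c s \<noteq> 0 \<longrightarrow> lex_less (flat_seq s) (flat_seq xs))) \<and>
     \<comment> \<open>(4) quadratic relations\<close>
     (\<forall>(\<alpha>::nat \<Rightarrow> 'p) \<sigma>. (\<forall>i<4. \<alpha> i \<in> P) \<and> \<alpha> 0 \<le> \<alpha> 1 \<and> \<alpha> 1 \<le> \<alpha> 2 \<and> \<alpha> 2 \<le> \<alpha> 3 \<and>
        \<sigma> permutes {0..<4} \<and> (\<alpha> (\<sigma> 0), \<alpha> (\<sigma> 1)) \<in> D \<and> (\<alpha> (\<sigma> 2), \<alpha> (\<sigma> 3)) \<in> D
        \<longrightarrow> (\<alpha> 0, \<alpha> 1) \<in> D \<and> (\<alpha> 2, \<alpha> 3) \<in> D \<and>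
            (\<exists>\<epsilon> r. (\<epsilon> = 1 \<or> \<epsilon> = -1) \<and> std_coeffs D r \<and>
               (\<forall>s. r s \<noteq> 0 \<longrightarrow> length s = 2) \<and> r [(\<alpha> 0, \<alpha> 1), (\<alpha> 2, \<alpha> 3)] = 0 \<and>
               p (\<alpha> (\<sigma> 0), \<alpha> (\<sigma> 1)) * p (\<alpha> (\<sigma> 2), \<alpha> (\<sigma> 3)) =
                 emb \<epsilon> * (p (\<alpha> 0, \<alpha> 1) * p (\<alpha> 2, \<alpha> 3)) + lincomb emb p r))"

end

theory Submission imports Defs begin

definition Mon :: "('v \<Rightarrow> 'a::comm_ring_1) \<Rightarrow> ('v \<Rightarrow>\<^sub>0 nat) \<Rightarrow> 'a" where
  "Mon p m = (\<Prod>v\<in>Poly_Mapping.keys m. p v ^ Poly_Mapping.lookup m v)"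

lemma emb0: "complex_alg emb \<Longrightarrow> emb 0 = 0"
  unfolding complex_alg_def by (metis add_cancel_right_right add.right_neutral)

lemma peval_superset:
  assumes "complex_alg emb" "finite S" "Poly_Mapping.keys f \<subseteq> S"
  shows "peval emb p f = (\<Sum>m\<in>S. emb (Poly_Mapping.lookup f m) * Mon p m)"
  unfolding peval_def Mon_def
  apply (rule sum.mono_neutral_left[OF assms(2,3)])
  using emb0[OF assms(1)] by (simp add: in_keys_iff)

lemma peval_add:
  assumes "complex_alg emb"
  shows "peval emb p (a + b) = peval emb p a + peval emb p b"
proof -
  let ?S = "Poly_Mapping.keys a \<union> Poly_Mapping.keys b"
  have "peval emb p (a + b) = (\<Sum>m\<in>?S. emb (Poly_Mapping.lookup (a+b) m) * Mon p m)"
    by (rule peval_superset[OF assms]) (auto simp: keys_add)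
  also have "\<dots> = (\<Sum>m\<in>?S. emb (Poly_Mapping.lookup a m) * Mon p m) + (\<Sum>m\<in>?S. emb (Poly_Mapping.lookup b m) * Mon p m)"
    using assms unfolding complex_alg_def by (simp add: lookup_add distrib_right sum.distrib)
  also have "\<dots> = peval emb p a + peval emb p b"
    by (subst (1 2) peval_superset[OF assms]) auto
  finally show ?thesis .
qed

lemma peval_sum:
  assumes "complex_alg emb"
  shows "peval emb p (\<Sum>k\<in>K. g k) = (\<Sum>k\<in>K. peval emb p (g k))"
proof (induction K rule: infinite_finite_induct)
  case (infinite A) then show ?case by (simp add: peval_def)
next
  case empty then show ?case by (simp add: peval_def)
next
  case (insert x F) then show ?case by (simp add: peval_add[OF assms])
qed

lemma peval_single:
  assumes "complex_alg emb"
  shows "peval emb p (Poly_Mapping.single k c) = emb c * Mon p k"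
  by (subst peval_superset[OF assms, of "{k}"]) auto

lemma Mon_add: "Mon p (m + k) = Mon p m * Mon p k"
proof -
  let ?S = "Poly_Mapping.keys m \<union> Poly_Mapping.keys k"
  have e: "Mon p q = (\<Prod>v\<in>?S. p v ^ Poly_Mapping.lookup q v)" if "Poly_Mapping.keys q \<subseteq> ?S" for q
    unfolding Mon_def
    by (rule prod.mono_neutral_left) (use that in \<open>auto simp: in_keys_iff\<close>)
  have "Mon p (m + k) = (\<Prod>v\<in>?S. p v ^ Poly_Mapping.lookup (m+k) v)"
    by (rule e) (auto simp: keys_add)
  also have "\<dots> = (\<Prod>v\<in>?S. p v ^ Poly_Mapping.lookup m v) * (\<Prod>v\<in>?S. p v ^ Poly_Mapping.lookup k v)"
    by (simp add: lookup_add power_add prod.distrib)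
  also have "\<dots> = Mon p m * Mon p k" by (subst (1 2) e) auto
  finally show ?thesis .
qed

lemma poly_expand: "f = (\<Sum>k\<in>Poly_Mapping.keys f. Poly_Mapping.single k (Poly_Mapping.lookup f k))"
  by (rule poly_mapping_eqI) (auto simp: lookup_sum lookup_single when_def in_keys_iff)

lemma var_pow: "var x ^ N = Poly_Mapping.single (Poly_Mapping.single x N) 1"
proof (induction N)
  case 0 then show ?case by (simp add: var_def)
next
  case (Suc N)
  have "Poly_Mapping.single x 1 + Poly_Mapping.single x N = Poly_Mapping.single x (Suc N)"
    by (simp add: single_add[symmetric])
  then show ?case using Suc by (simp add: var_def mult_single)
qed

lemma peval_var_mult:
  assumes "complex_alg emb"
  shows "peval emb p (var x ^ N * f) = p x ^ N * peval emb p f"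
proof -
  let ?m = "Poly_Mapping.single x N"
  have "var x ^ N * f = (\<Sum>k\<in>Poly_Mapping.keys f. Poly_Mapping.single (?m + k) (Poly_Mapping.lookup f k))"
  proof -
    have "var x ^ N * f = var x ^ N * (\<Sum>k\<in>Poly_Mapping.keys f. Poly_Mapping.single k (Poly_Mapping.lookup f k))"
      using poly_expand[of f] by metis
    also have "\<dots> = (\<Sum>k\<in>Poly_Mapping.keys f. Poly_Mapping.single (?m + k) (Poly_Mapping.lookup f k))"
      unfolding var_pow sum_distrib_left by (simp add: mult_single)
    finally show ?thesis .
  qed
  hence "peval emb p (var x ^ N * f) = (\<Sum>k\<in>Poly_Mapping.keys f. emb (Poly_Mapping.lookup f k) * (Mon p ?m * Mon p k))"
    by (simp add: peval_sum[OF assms] peval_single[OF assms] Mon_add)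
  also have "\<dots> = Mon p ?m * (\<Sum>k\<in>Poly_Mapping.keys f. emb (Poly_Mapping.lookup f k) * Mon p k)"
    unfolding sum_distrib_left by (rule sum.cong) (simp_all add: mult_ac)
  also have "(\<Sum>k\<in>Poly_Mapping.keys f. emb (Poly_Mapping.lookup f k) * Mon p k) = peval emb p f"
    by (simp add: peval_def Mon_def)
  also have "Mon p ?m = p x ^ N" by (simp add: Mon_def)
  finally show ?thesis .
qed

lemma doset_diag:
  assumes "is_doset P D" "a \<in> P" shows "(a, a) \<in> D"
proof -
  have "\<forall>a\<in>P. (a, a) \<in> D" using assms(1) unfolding is_doset_def by (rule conjunct1)
  thus ?thesis using assms(2) by (rule bspec)
qed

lemma doset_fst:
  assumes "is_doset P D" "(u, v) \<in> D" shows "u \<in> P"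
proof -
  have "D \<subseteq> {(a, b). a \<in> P \<and> b \<in> P \<and> a \<le> b}"
    using assms(1) unfolding is_doset_def by (rule conjunct1[OF conjunct2])
  thus ?thesis using assms(2) by auto
qed

lemma least_elem:
  assumes "is_doset P D" "finite D" "\<exists>!\<alpha>0. minimal_in P \<alpha>0" "minimal_in P a0" "b \<in> P"
  shows "a0 \<le> b"
proof -
  have "P \<subseteq> fst ` D"
  proof
    fix a assume "a \<in> P"
    hence "(a, a) \<in> D" using assms(1) doset_diag by blast
    thus "a \<in> fst ` D" by (rule rev_image_eqI) simp
  qed
  hence fin: "finite P" using assms(2) finite_subset by blast
  obtain m where m: "m \<in> P" "m \<le> b" "\<forall>c\<in>P. c \<le> m \<longrightarrow> m = c"
    using finite_has_minimal2[OF fin assms(5)] by blast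
  have "minimal_in P m" unfolding minimal_in_def using m by auto
  with assms(3,4) have "m = a0" by blast
  with m show ?thesis by simp
qed

definition shift :: "'p \<Rightarrow> (('p \<times> 'p) list \<Rightarrow> complex) \<Rightarrow> (('p \<times> 'p) list \<Rightarrow> complex)" where
  "shift a c t = (case t of [] \<Rightarrow> 0 | x # s \<Rightarrow> if x = (a, a) then c s else 0)"

lemma shift_support: "{t. shift a c t \<noteq> 0} = (Cons (a,a)) ` {s. c s \<noteq> 0}"
proof (rule set_eqI)
  fix t show "t \<in> {t. shift a c t \<noteq> 0} \<longleftrightarrow> t \<in> (Cons (a,a)) ` {s. c s \<noteq> 0}"
    by (cases t) (auto simp: shift_def image_iff)
qed

lemma mult_zero_cancel:
  assumes doset: "is_doset P D" and fD: "finite D" and u: "\<exists>!\<alpha>0. minimal_in P \<alpha>0"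
    and asl: "ASL P D emb G p" and a0: "minimal_in P a0"
    and z: "p (a0, a0) * x = 0"
  shows "x = 0"
proof -
  have basis: "\<forall>a. \<exists>!c. std_coeffs D c \<and> a = lincomb emb p c" using asl unfolding ASL_def by (elim conjE) assumption
  have alg: "complex_alg emb" using asl unfolding ASL_def by (elim conjE) assumption
  have a0P: "a0 \<in> P" using a0 unfolding minimal_in_def by blast
  have a0D: "(a0, a0) \<in> D" using doset a0P by (rule doset_diag)
  have DP: "\<And>u v. (u, v) \<in> D \<Longrightarrow> u \<in> P" using doset by (rule doset_fst)
  obtain c where c: "std_coeffs D c" "x = lincomb emb p c" using basis by blast
  have sc: "std_coeffs D (shift a0 c)"
  proof -
    have "finite {t. shift a0 c t \<noteq> 0}" using c(1) unfolding shift_support std_coeffs_def by simp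
    moreover have "standard D t" if "shift a0 c t \<noteq> 0" for t
    proof -
      from that obtain s where t: "t = (a0,a0) # s" "c s \<noteq> 0" using shift_support[of a0 c] by blast
      hence s: "standard D s" using c(1) unfolding std_coeffs_def by blast
      have "successively (\<le>) (a0 # a0 # flat_seq s)"
      proof (cases s)
        case Nil then show ?thesis using s by (simp add: standard_def flat_seq_def)
      next
        case (Cons y ys)
        obtain u v where y: "y = (u, v)" by force
        have "u \<in> P" using s Cons y DP unfolding standard_def by auto
        hence "a0 \<le> u" using least_elem[OF doset fD u a0] by blast
        then show ?thesis using s Cons y by (simp add: standard_def flat_seq_def)
      qed
      then show ?thesis using s a0D t unfolding standard_def flat_seq_def by simp
    qed
    ultimately show ?thesis unfolding std_coeffs_def by blast
  qed
  have "lincomb emb p (shift a0 c) = p (a0, a0) * x"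
  proof -
    have "lincomb emb p (shift a0 c) = (\<Sum>s\<in>{s. c s \<noteq> 0}. emb (shift a0 c ((a0,a0)#s)) * monom p ((a0,a0)#s))"
      unfolding lincomb_def shift_support by (subst sum.reindex) (auto simp: inj_on_def)
    also have "\<dots> = (\<Sum>s\<in>{s. c s \<noteq> 0}. p (a0, a0) * (emb (c s) * monom p s))"
      by (rule sum.cong) (simp_all add: shift_def monom_def mult_ac)
    also have "\<dots> = p (a0, a0) * x"
      unfolding c(2) lincomb_def sum_distrib_left ..
    finally show ?thesis .
  qed
  hence l0: "lincomb emb p (shift a0 c) = 0" using z by simp
  have sz: "std_coeffs D (\<lambda>_. 0)" unfolding std_coeffs_def by simp
  have l00: "lincomb emb p (\<lambda>_. 0) = 0" unfolding lincomb_def by simp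
  obtain d where d: "\<And>c'. std_coeffs D c' \<and> 0 = lincomb emb p c' \<Longrightarrow> c' = d"
    using basis by blast
  have e1: "shift a0 c = d" using d sc l0 by simp
  have e2: "(\<lambda>_. 0) = d" using d sz l00 by simp
  have sh0: "shift a0 c = (\<lambda>_. 0)" using e1 e2 by simp
  have "c s = 0" for s using fun_cong[OF sh0, of "(a0,a0)#s"] by (simp add: shift_def)
  hence "c = (\<lambda>_. 0)" by blast
  then show ?thesis using c(2) l00 by simp
qed

theorem theorem3p7:
  fixes P :: "'p::order set" and D :: "('p \<times> 'p) set"
    and emb :: "complex \<Rightarrow> 'a::comm_ring_1" and G :: "nat \<Rightarrow> 'a set"
    and p :: "'p \<times> 'p \<Rightarrow> 'a"
  assumes "is_doset P D" and "finite D"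
    and "\<exists>!\<alpha>0. minimal_in P \<alpha>0"
    and "ASL P D emb G p"
    and "f \<in> polys_in D"
    and "\<forall>x\<in>D. peval emb p (var x ^ N * f) = 0"
  shows "peval emb p f = 0"
proof -
  obtain a0 where a0: "minimal_in P a0" using assms(3) by blast
  have alg: "complex_alg emb" using assms(4) unfolding ASL_def by (elim conjE) assumption
  have "(a0, a0) \<in> D" using assms(1) a0 doset_diag unfolding minimal_in_def by blast
  hence "peval emb p (var (a0, a0) ^ N * f) = 0" using assms(6) by blast
  hence "p (a0, a0) ^ N * peval emb p f = 0"
    by (simp add: peval_var_mult[OF alg])
  then show ?thesis
  proof (induction N)
    case 0 then show ?case by simp
  next
    case (Suc n)
    have "p (a0, a0) * (p (a0, a0) ^ n * peval emb p f) = 0" using Suc.prems by (simp add: mult.assoc)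
    then show ?case by (rule Suc.IH[OF mult_zero_cancel[OF assms(1-4) a0]])
  qed
qed

end
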